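(* Let $D$, $C$, $A$ be measurable spaces and $\mathcal{D}$ a probability distribution on $D$. Suppose $\mathrm{enc} : D \to C \times A$ and $\mathrm{dec} : C \times A \to D$ are mutually inverse measurable bijections such that the pushforward $\mathrm{enc}_*\mathcal{D}$ is a product distribution $\mathcal{C} \times \mathcal{A}$ on $C \times A$, and let the discriminative classifier be $\mathrm{cls} = \pi_A \circ \mathrm{enc} : D \to A$ (so $\mathrm{cls}_*\mathcal{D} = \mathcal{A}$ is a balanced attribute of $\mathcal{D}$). Let $\mathrm{put} : D \times A \to D$, $\mathrm{put}(d,a) = \mathrm{dec}(\pi_C(\mathrm{enc}(d)), a)$. Define the stochastic map $\mathrm{cls}^\dagger : A \to D$ sending $a$ to the distribution of $\mathrm{put}(d, a)$ where $d \sim \mathcal{D}$ is drawn independently. Then $\mathrm{cls}^\dagger$ is a Bayesian inversion of $\mathrm{cls}$ with respect to $\mathcal{D}$: the joint distribution of $(x, \mathrm{cls}(x))$ for $x \sim \mathcal{D}$ equals the joint distribution of $(x', a)$ where $a \sim \mathrm{cls}_*\mathcal{D}$ and $x' \sim \mathrm{cls}^\dagger(a)$.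
   Context: A Bayesian inversion of a stochastic map $f : X \to Y$ with respect to a distribution $\mathcal{P}$ on $X$ is a stochastic map $f^\dagger : Y \to X$ such that, in distribution, the pair $(x, f(x))$ with $x \sim \mathcal{P}$ coincides with the pair $(f^\dagger(y), y)$ with $y \sim f_*\mathcal{P}$. Here $\pi_C, \pi_A$ denote the product projections. *)

theory Defs
  imports "HOL-Probability.Probability"
begin

(* A stochastic map X -> Y is a measurable kernel f \<in> X ->M prob_algebra Y.
  The pushforward of a distribution P along f is bind P f. *)

definition stoch_pushforward :: "'x measure \<Rightarrow> ('x \<Rightarrow> 'y measure) \<Rightarrow> 'y measure" where
  "stoch_pushforward P f = bind P f"

definition joint_graph :: "'x measure \<Rightarrow> 'y measure \<Rightarrow> 'x measure \<Rightarrow> ('x \<Rightarrow> 'y measure) \<Rightarrow> ('x \<times> 'y) measure" where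
  "joint_graph X Y P f = bind P (\<lambda>x. distr (f x) (X \<Otimes>\<^sub>M Y) (\<lambda>y. (x, y)))"

definition joint_cograph :: "'x measure \<Rightarrow> 'y measure \<Rightarrow> 'y measure \<Rightarrow> ('y \<Rightarrow> 'x measure) \<Rightarrow> ('x \<times> 'y) measure" where
  "joint_cograph X Y Q g = bind Q (\<lambda>y. distr (g y) (X \<Otimes>\<^sub>M Y) (\<lambda>x. (x, y)))"

definition bayesian_inversion ::
  "'x measure \<Rightarrow> 'y measure \<Rightarrow> 'x measure \<Rightarrow> ('x \<Rightarrow> 'y measure) \<Rightarrow> ('y \<Rightarrow> 'x measure) \<Rightarrow> bool" where
  "bayesian_inversion X Y P f g \<longleftrightarrow>
     g \<in> Y \<rightarrow>\<^sub>M prob_algebra X \<and>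
     joint_graph X Y P f = joint_cograph X Y (stoch_pushforward P f) g"

end

theory Submission
  imports Defs
begin

theorem proposition3:
  fixes MD :: "'d measure" and MC :: "'c measure" and MA :: "'a measure"
    and PD :: "'d measure" and PC :: "'c measure" and PA :: "'a measure"
    and enc :: "'d \<Rightarrow> 'c \<times> 'a" and dec :: "'c \<times> 'a \<Rightarrow> 'd"
  assumes "prob_space PD" and "sets PD = sets MD"
    and "prob_space PC" and "sets PC = sets MC"
    and "prob_space PA" and "sets PA = sets MA"
    and "enc \<in> MD \<rightarrow>\<^sub>M MC \<Otimes>\<^sub>M MA"
    and "dec \<in> MC \<Otimes>\<^sub>M MA \<rightarrow>\<^sub>M MD"
    and "\<forall>d\<in>space MD. dec (enc d) = d"
    and "\<forall>y\<in>space (MC \<Otimes>\<^sub>M MA). enc (dec y) = y"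
    and "distr PD (MC \<Otimes>\<^sub>M MA) enc = PC \<Otimes>\<^sub>M PA"
  shows "bayesian_inversion MD MA PD
           (\<lambda>d. return MA (snd (enc d)))
           (\<lambda>a. distr PD MD (\<lambda>d. dec (fst (enc d), a)))"
proof -
  interpret PD: prob_space PD by fact
  interpret PC: prob_space PC by fact
  interpret PA: prob_space PA by fact
  interpret PCA: pair_prob_space PC PA ..
  note sD[measurable_cong] = assms(2)
  note sC[measurable_cong] = assms(4)
  note sA[measurable_cong] = assms(6)
  note encM[measurable] = assms(7)
  note decM[measurable] = assms(8)
  have spD: "space PD = space MD" using assms(2) by (rule sets_eq_imp_space_eq)
  have spC: "space PC = space MC" using assms(4) by (rule sets_eq_imp_space_eq)
  have spA: "space PA = space MA" using assms(6) by (rule sets_eq_imp_space_eq)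
  define N where "N = MD \<Otimes>\<^sub>M MA"
  have retM[measurable]: "return N \<in> N \<rightarrow>\<^sub>M subprob_algebra N" by (rule return_measurable)
  have L: "joint_graph MD MA PD (\<lambda>d. return MA (snd (enc d))) = distr PD N (\<lambda>x. (x, snd (enc x)))"
  proof -
    have "joint_graph MD MA PD (\<lambda>d. return MA (snd (enc d)))
        = bind PD (\<lambda>x. return N (x, snd (enc x)))"
      unfolding joint_graph_def N_def
    proof (intro bind_cong refl)
      fix x assume x: "x \<in> space PD"
      have "snd (enc x) \<in> space MA"
        using measurable_space[OF encM, of x] x spD by (auto simp: space_pair_measure)
      then show "distr (return MA (snd (enc x))) (MD \<Otimes>\<^sub>M MA) (Pair x) = return (MD \<Otimes>\<^sub>M MA) (x, snd (enc x))"
        using x spD by (intro distr_return) auto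
    qed
    also have "\<dots> = distr PD N (\<lambda>x. (x, snd (enc x)))"
      by (rule bind_return_distr') (auto simp: N_def PD.not_empty)
    finally show ?thesis .
  qed
  have P: "stoch_pushforward PD (\<lambda>d. return MA (snd (enc d))) = PA"
  proof -
    have "stoch_pushforward PD (\<lambda>d. return MA (snd (enc d))) = distr PD MA (\<lambda>d. snd (enc d))"
      unfolding stoch_pushforward_def by (rule bind_return_distr') (auto simp: PD.not_empty)
    also have "\<dots> = distr (distr PD (MC \<Otimes>\<^sub>M MA) enc) MA snd"
      by (subst distr_distr) (auto simp: comp_def)
    also have "\<dots> = distr (PC \<Otimes>\<^sub>M PA) MA snd" using assms(11) by simp
    also have "\<dots> = PA"
    proof (rule measure_eqI)
      show "sets (distr (PC \<Otimes>\<^sub>M PA) MA snd) = sets PA" using assms(6) by simp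
      fix A assume "A \<in> sets (distr (PC \<Otimes>\<^sub>M PA) MA snd)"
      then have A: "A \<in> sets PA" using assms(6) by simp
      have "snd -` A \<inter> space (PC \<Otimes>\<^sub>M PA) = space PC \<times> A"
        using sets.sets_into_space[OF A] by (auto simp: space_pair_measure)
      then show "emeasure (distr (PC \<Otimes>\<^sub>M PA) MA snd) A = emeasure PA A"
        using A assms(6) PA.emeasure_pair_measure_Times[OF sets.top[of PC] A]
        by (simp add: emeasure_distr PC.emeasure_space_1)
    qed
    finally show ?thesis .
  qed
  define h where "h = (\<lambda>c a. (dec (c, a), a))"
  have hM[measurable]: "(\<lambda>(c, a). h c a) \<in> MC \<Otimes>\<^sub>M MA \<rightarrow>\<^sub>M N"
    unfolding h_def N_def by measurable
  have R_in: "distr (distr PD MD (\<lambda>d. dec (fst (enc d), a))) N (\<lambda>x. (x, a)) = distr PC N (\<lambda>c. h c a)"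
    if a: "a \<in> space PA" for a
  proof -
    have aM: "a \<in> space MA" using a spA by simp
    have "distr (distr PD MD (\<lambda>d. dec (fst (enc d), a))) N (\<lambda>x. (x, a))
        = distr PD N (\<lambda>d. (dec (fst (enc d), a), a))"
      using aM by (subst distr_distr) (auto simp: comp_def N_def)
    also have "\<dots> = distr (distr PD (MC \<Otimes>\<^sub>M MA) enc) N (\<lambda>p. h (fst p) a)"
      using aM by (subst distr_distr) (auto simp: comp_def N_def h_def)
    also have "\<dots> = distr (PC \<Otimes>\<^sub>M PA) N (\<lambda>p. h (fst p) a)" using assms(11) by simp
    also have "\<dots> = distr (distr (PC \<Otimes>\<^sub>M PA) PC fst) N (\<lambda>c. h c a)"
      using aM by (subst distr_distr) (auto simp: comp_def N_def h_def)
    also have "\<dots> = distr PC N (\<lambda>c. h c a)" by (simp add: PA.distr_pair_fst)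
    finally show ?thesis .
  qed
  have kerM: "(\<lambda>a. distr PC N (\<lambda>c. h c a)) \<in> PA \<rightarrow>\<^sub>M subprob_algebra N"
  proof (rule measurable_distr2)
    show "(\<lambda>(a, c). h c a) \<in> PA \<Otimes>\<^sub>M PC \<rightarrow>\<^sub>M N"
      unfolding h_def N_def by measurable
    show "(\<lambda>_. PC) \<in> PA \<rightarrow>\<^sub>M subprob_algebra PC"
      by (rule measurable_const[OF PC.M_in_subprob])
  qed
  have R: "joint_cograph MD MA PA (\<lambda>a. distr PD MD (\<lambda>d. dec (fst (enc d), a)))
      = distr PD N (\<lambda>x. (x, snd (enc x)))"
  proof -
    have "joint_cograph MD MA PA (\<lambda>a. distr PD MD (\<lambda>d. dec (fst (enc d), a)))
        = bind PA (\<lambda>a. distr PC N (\<lambda>c. h c a))"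
      unfolding joint_cograph_def N_def[symmetric]
      by (intro bind_cong refl R_in)
    also have "\<dots> = distr (PC \<Otimes>\<^sub>M PA) N (\<lambda>(c, a). h c a)"
    proof (rule measure_eqI)
      show "sets (bind PA (\<lambda>a. distr PC N (\<lambda>c. h c a))) = sets (distr (PC \<Otimes>\<^sub>M PA) N (\<lambda>(c, a). h c a))"
        by (simp add: PA.not_empty)
      fix A assume "A \<in> sets (bind PA (\<lambda>a. distr PC N (\<lambda>c. h c a)))"
      then have A: "A \<in> sets N" by (simp add: PA.not_empty)
      have hM': "(\<lambda>(c, a). h c a) \<in> PC \<Otimes>\<^sub>M PA \<rightarrow>\<^sub>M N" by measurable
      have hc: "(\<lambda>c. h c a) \<in> PC \<rightarrow>\<^sub>M N" if "a \<in> space PA" for a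
      proof -
        have aM: "a \<in> space MA" using that spA by simp
        have "(\<lambda>c. (c, a)) \<in> PC \<rightarrow>\<^sub>M MC \<Otimes>\<^sub>M MA"
          using aM by (intro measurable_Pair measurable_const) (auto simp: measurable_ident_sets[OF sC])
        from measurable_compose[OF this hM] show ?thesis by simp
      qed
      have "emeasure (bind PA (\<lambda>a. distr PC N (\<lambda>c. h c a))) A
          = \<integral>\<^sup>+a. emeasure (distr PC N (\<lambda>c. h c a)) A \<partial>PA"
        by (rule emeasure_bind[OF PA.not_empty kerM A])
      also have "\<dots> = \<integral>\<^sup>+a. emeasure PC ((\<lambda>c. h c a) -` A \<inter> space PC) \<partial>PA"
        by (intro nn_integral_cong) (simp add: emeasure_distr hc A)
      also have "\<dots> = \<integral>\<^sup>+a. emeasure PC ((\<lambda>c. (c, a)) -` ((\<lambda>(c, a). h c a) -` A \<inter> space (PC \<Otimes>\<^sub>M PA))) \<partial>PA"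
        by (intro nn_integral_cong arg_cong2[where f=emeasure] refl) (auto simp: space_pair_measure)
      also have "\<dots> = emeasure (PC \<Otimes>\<^sub>M PA) ((\<lambda>(c, a). h c a) -` A \<inter> space (PC \<Otimes>\<^sub>M PA))"
        by (rule PCA.emeasure_pair_measure_alt2[symmetric]) (rule measurable_sets[OF hM' A])
      also have "\<dots> = emeasure (distr (PC \<Otimes>\<^sub>M PA) N (\<lambda>(c, a). h c a)) A"
        by (simp add: emeasure_distr hM' A)
      finally show "emeasure (bind PA (\<lambda>a. distr PC N (\<lambda>c. h c a))) A
          = emeasure (distr (PC \<Otimes>\<^sub>M PA) N (\<lambda>(c, a). h c a)) A" .
    qed
    also have "\<dots> = distr (distr PD (MC \<Otimes>\<^sub>M MA) enc) N (\<lambda>(c, a). h c a)"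
      using assms(11) by simp
    also have "\<dots> = distr PD N (\<lambda>d. (\<lambda>(c, a). h c a) (enc d))"
      by (subst distr_distr) (auto simp: comp_def)
    also have "\<dots> = distr PD N (\<lambda>x. (x, snd (enc x)))"
    proof (rule distr_cong)
      fix x assume "x \<in> space PD"
      then have "dec (enc x) = x" using assms(9) spD by auto
      then show "(\<lambda>(c, a). h c a) (enc x) = (x, snd (enc x))"
        by (cases "enc x") (simp add: h_def)
    qed auto
    finally show ?thesis .
  qed
  have K: "(\<lambda>a. distr PD MD (\<lambda>d. dec (fst (enc d), a))) \<in> MA \<rightarrow>\<^sub>M prob_algebra MD"
  proof (rule measurable_prob_algebraI)
    fix a assume "a \<in> space MA"
    then show "prob_space (distr PD MD (\<lambda>d. dec (fst (enc d), a)))"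
      by (intro PD.prob_space_distr) measurable
  next
    show "(\<lambda>a. distr PD MD (\<lambda>d. dec (fst (enc d), a))) \<in> MA \<rightarrow>\<^sub>M subprob_algebra MD"
    proof (rule measurable_distr2)
      show "(\<lambda>(a, d). dec (fst (enc d), a)) \<in> MA \<Otimes>\<^sub>M PD \<rightarrow>\<^sub>M MD" by measurable
      show "(\<lambda>_. PD) \<in> MA \<rightarrow>\<^sub>M subprob_algebra PD"
        by (rule measurable_const[OF PD.M_in_subprob])
    qed
  qed
  show ?thesis
    unfolding bayesian_inversion_def using K L R P by simp
qed

end
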